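(* Let $\mathcal D$ be a nonempty set and let $F,G$ be planar forests decorated by $\mathcal D$. Let $\mathcal I(F,G)$ be the set of bijections $f$ from the vertex set of $F$ to the vertex set of $G$ such that: (1) for all vertices $x,y$ of $F$, $x\ge_{haut}y$ implies $f(x)\ge_{gauche}f(y)$; (2) for all vertices $x,y$ of $F$, $f(x)\ge_{haut}f(y)$ implies $x\ge_{gauche}y$; (3) for every vertex $x$ of $F$, $x$ and $f(x)$ have the same decoration. Then $(F,G)=\mathrm{card}(\mathcal I(F,G))$.
   Context: $\mathcal H^{\mathcal D}_{P,R}$ is the free associative unital $\mathbb Q$-algebra on the set of planar rooted trees (finite trees with a root, embedded in the plane, edges oriented away from the root) decorated by $\mathcal D$; its basis is the set of planar forests $t_1\cdots t_n$ ($1$ = empty forest). Coproduct: $\Delta(F)=\sum_cP^c(F)\otimes R^c(F)$ over all cuts $c=(c_i)$ of $F=t_1\cdots t_n$, each $c_i$ being the empty cut of $t_i$ ($P=1,R=t_i$), the total cut ($P=t_i,R=1$), or an admissible cut (a nonempty set of edges of $t_i$ such that every oriented path meets at most one of them, with $R^{c_i}(t_i)$ the component of the root and $P^{c_i}(t_i)$ the left-to-right planar forest of the other components); $P^c(F)=\prod_iP^{c_i}(t_i)$, $R^c(F)=\prod_iR^{c_i}(t_i)$; counit $\varepsilon(F)=0$ for $F\ne1$. $B_d^+$ grafts $t_1\cdots t_n$ (in order) on a new root decorated by $d$; $\bullet_d=B_d^+(1)$; $\gamma_d$ is linear with $\gamma_d(1)=0$, $\gamma_d(t_1\cdots t_n)=t_1\cdots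 t_{n-1}$ if $t_n=\bullet_d$, $0$ otherwise. $(\,,\,)$ denotes the unique bilinear form on $\mathcal H^{\mathcal D}_{P,R}$ with $(1,x)=\varepsilon(x)$, $(x_1x_2,y)=(x_1\otimes x_2,\Delta(y))$ and $(B_d^+(x),y)=(x,\gamma_d(y))$ for all $x,x_1,x_2,y$ and $d$ (it exists). Orders on the vertex set of a nonempty forest $F$: $x\ge_{haut}y$ iff there is an oriented path (possibly of length $0$) from $y$ to $x$. The partial order $\ge_{gauche}$ is reflexive and defined for distinct vertices recursively on the weight: write $F=t_1\cdots t_n$, $x$ a vertex of $t_i$, $y$ a vertex of $t_j$; if $i<j$ then $x\ge_{gauche}y$; if $i>j$ then $y\ge_{gauche}x$; if $i=j$ and $x$ or $y$ is the root of $t_i$, they are incomparable; if $i=j$ and neither is the root, they are compared in the forest obtained from $t_i$ by deleting its root. *)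

theory Defs
  imports Complex_Main "HOL-Library.FuncSet" "HOL-Library.Sublist"
begin

datatype 'd ptree = Node 'd "'d ptree list"

type_synonym 'd pforest = "'d ptree list"

text \<open>B_d^+ grafting a forest on a new root decorated by d is the constructor Node d;
  the empty forest [] is the unit 1; the product of forests is list concatenation.\<close>

abbreviation Bplus :: "'d \<Rightarrow> 'd pforest \<Rightarrow> 'd ptree" where
  "Bplus d F \<equiv> Node d F"

section \<open>Coproduct (as the list, with multiplicity, of all cuts)\<close>

fun list_prod :: "('a list \<times> 'b list) list list \<Rightarrow> ('a list \<times> 'b list) list" where
  "list_prod [] = [([], [])]"
| "list_prod (opts # rest) =
     concat (map (\<lambda>(p, r). map (\<lambda>(p', r'). (p @ p', r @ r')) (list_prod rest)) opts)"

text \<open>rcuts t: all cuts of t that keep the root (the empty cut and all admissible cuts),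
  given as (P^c(t), R^c(t)).  The pruned components are listed left to right.\<close>

fun rcuts :: "'d ptree \<Rightarrow> ('d pforest \<times> 'd ptree) list" where
  "rcuts (Node d ts) =
     map (\<lambda>(p, rs). (p, Node d rs))
       (list_prod (map (\<lambda>t. ([t], []) # map (\<lambda>(p, r). (p, [r])) (rcuts t)) ts))"

text \<open>All cuts of a tree: the total cut (P = t, R = 1), then the empty and admissible cuts.\<close>

definition tree_cuts :: "'d ptree \<Rightarrow> ('d pforest \<times> 'd pforest) list" where
  "tree_cuts t = ([t], []) # map (\<lambda>(p, r). (p, [r])) (rcuts t)"

text \<open>Delta(F) = sum over cuts c of P^c(F) (x) R^c(F).\<close>

definition coprod :: "'d pforest \<Rightarrow> ('d pforest \<times> 'd pforest) list" where
  "coprod F = list_prod (map tree_cuts F)"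

definition counit :: "'d pforest \<Rightarrow> rat" where
  "counit F = (if F = [] then 1 else 0)"

text \<open>gamma_d; None stands for the value 0.\<close>

definition gamma :: "'d \<Rightarrow> 'd pforest \<Rightarrow> 'd pforest option" where
  "gamma d G = (if G \<noteq> [] \<and> last G = Node d [] then Some (butlast G) else None)"

text \<open>A bilinear form is determined by its values on pairs of basis elements (forests);
  the defining identities, by bilinearity, amount to the following conditions on basis
  elements.\<close>

definition is_pairing :: "('d pforest \<Rightarrow> 'd pforest \<Rightarrow> rat) \<Rightarrow> bool" where
  "is_pairing p \<longleftrightarrow>
     (\<forall>G. p [] G = counit G) \<and>
     (\<forall>F1 F2 G. p (F1 @ F2) G = (\<Sum>(P, R) \<leftarrow> coprod G. p F1 P * p F2 R)) \<and>
     (\<forall>d F G. p [Bplus d F] G = (case gamma d G of None \<Rightarrow> 0 | Some G' \<Rightarrow> p F G'))"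

definition pairing :: "'d pforest \<Rightarrow> 'd pforest \<Rightarrow> rat" where
  "pairing = (THE p. is_pairing p)"

text \<open>A vertex of a forest t_1...t_n is addressed by a nonempty path i # p: tree t_i
  (0-based), then successive child indices.\<close>

fun is_vertex :: "'d pforest \<Rightarrow> nat list \<Rightarrow> bool" where
  "is_vertex ts [] = False"
| "is_vertex ts (i # p) =
     (i < length ts \<and> (case ts ! i of Node d cs \<Rightarrow> p = [] \<or> is_vertex cs p))"

definition vertices :: "'d pforest \<Rightarrow> nat list set" where
  "vertices F = {x. is_vertex F x}"

fun decoration :: "'d pforest \<Rightarrow> nat list \<Rightarrow> 'd" where
  "decoration ts [] = undefined"
| "decoration ts (i # p) =
     (case ts ! i of Node d cs \<Rightarrow> if p = [] then d else decoration cs p)"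

text \<open>x >=_haut y iff there is an oriented path (possibly of length 0) from y to x,
  i.e. y is an ancestor of x or equal to x.\<close>

definition haut_ge :: "'d pforest \<Rightarrow> nat list \<Rightarrow> nat list \<Rightarrow> bool" where
  "haut_ge F x y \<longleftrightarrow> x \<in> vertices F \<and> y \<in> vertices F \<and> prefix y x"

fun gauche_path_ge :: "nat list \<Rightarrow> nat list \<Rightarrow> bool" where
  "gauche_path_ge (i # p) (j # q) =
     (if i = j then p = q \<or> (p \<noteq> [] \<and> q \<noteq> [] \<and> gauche_path_ge p q) else i < j)"
| "gauche_path_ge _ _ = False"

definition gauche_ge :: "'d pforest \<Rightarrow> nat list \<Rightarrow> nat list \<Rightarrow> bool" where
  "gauche_ge F x y \<longleftrightarrow> x \<in> vertices F \<and> y \<in> vertices F \<and> gauche_path_ge x y"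

definition I_set :: "'d pforest \<Rightarrow> 'd pforest \<Rightarrow> (nat list \<Rightarrow> nat list) set" where
  "I_set F G = {f \<in> vertices F \<rightarrow>\<^sub>E vertices G.
      bij_betw f (vertices F) (vertices G) \<and>
      (\<forall>x \<in> vertices F. \<forall>y \<in> vertices F. haut_ge F x y \<longrightarrow> gauche_ge G (f x) (f y)) \<and>
      (\<forall>x \<in> vertices F. \<forall>y \<in> vertices F. haut_ge G (f x) (f y) \<longrightarrow> gauche_ge F x y) \<and>
      (\<forall>x \<in> vertices F. decoration G (f x) = decoration F x)}"

end

theory Submission
  imports Defs
begin

definition shift :: "nat \<Rightarrow> nat list \<Rightarrow> nat list" where
  "shift n x = (case x of [] \<Rightarrow> [] | i # p \<Rightarrow> (n + i) # p)"

lemma shift_Cons[simp]: "shift n (i#p) = (n+i)#p" by (simp add: shift_def)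
lemma shift_Nil[simp]: "shift n [] = []" by (simp add: shift_def)
lemma shift_eq_Nil[simp]: "shift n x = [] \<longleftrightarrow> x = []" by (cases x) auto
lemma shift_eq_Nil2[simp]: "[] = shift n x \<longleftrightarrow> x = []" by (cases x) auto

fun children :: "'d ptree \<Rightarrow> 'd ptree list" where "children (Node d cs) = cs"
fun label :: "'d ptree \<Rightarrow> 'd" where "label (Node d cs) = d"

lemma is_vertex_Cons'[simp]: "is_vertex ts (i#p) \<longleftrightarrow> i < length ts \<and> (p = [] \<or> is_vertex (children (ts!i)) p)"
  by (cases "ts!i") auto

lemma decoration_Cons'[simp]: "decoration ts (i#p) = (if p = [] then label (ts!i) else decoration (children (ts!i)) p)"
  by (cases "ts!i") auto

declare is_vertex.simps(2)[simp del] decoration.simps(2)[simp del]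

lemma Cons_eq_shift[simp]: "i#p = shift n y \<longleftrightarrow> n \<le> i \<and> y = (i-n)#p" by (cases y) auto
lemma shift_eq_Cons[simp]: "shift n y = i#p \<longleftrightarrow> n \<le> i \<and> y = (i-n)#p" by (cases y) auto

lemma vertices_ne: "x \<in> vertices F \<Longrightarrow> x \<noteq> []"
  by (cases x) (auto simp: vertices_def)

lemma vertices_Nil[simp]: "vertices [] = {}"
proof -
  have "\<not> is_vertex [] x" for x :: "nat list" by (cases x) auto
  then show ?thesis by (auto simp: vertices_def)
qed

lemma is_vertex_append: "is_vertex (F1 @ F2) x \<longleftrightarrow> is_vertex F1 x \<or> (\<exists>y. is_vertex F2 y \<and> x = shift (length F1) y)"
proof (cases x)
  case Nil then show ?thesis by auto
next
  case (Cons i p)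
  show ?thesis
  proof (cases "i < length F1")
    case True
    then show ?thesis using Cons by (auto simp: is_vertex_Cons' nth_append)
  next
    case False
    have "is_vertex (F1 @ F2) x \<longleftrightarrow> is_vertex F2 ((i - length F1) # p)"
      using False Cons by (auto simp: is_vertex_Cons' nth_append)
    moreover have "(\<exists>y. is_vertex F2 y \<and> x = shift (length F1) y) \<longleftrightarrow> is_vertex F2 ((i - length F1) # p)"
    proof
      assume "\<exists>y. is_vertex F2 y \<and> x = shift (length F1) y"
      then obtain y where "is_vertex F2 y" "x = shift (length F1) y" by blast
      then show "is_vertex F2 ((i - length F1) # p)" using Cons by (cases y) auto
    next
      assume "is_vertex F2 ((i - length F1) # p)"
      then show "\<exists>y. is_vertex F2 y \<and> x = shift (length F1) y"
        using False Cons by (intro exI[of _ "(i - length F1) # p"]) auto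
    qed
    moreover have "\<not> is_vertex F1 x" using False Cons by (auto simp: is_vertex_Cons')
    ultimately show ?thesis by blast
  qed
qed

lemma vertices_append: "vertices (F1 @ F2) = vertices F1 \<union> shift (length F1) ` vertices F2"
  by (auto simp: vertices_def is_vertex_append)

lemma decoration_append1: "x \<in> vertices F1 \<Longrightarrow> decoration (F1 @ F2) x = decoration F1 x"
  by (cases x) (auto simp: vertices_def decoration_Cons' is_vertex_Cons' nth_append)

lemma decoration_append2: "y \<in> vertices F2 \<Longrightarrow> decoration (F1 @ F2) (shift (length F1) y) = decoration F2 y"
  by (cases y) (auto simp: vertices_def decoration_Cons' is_vertex_Cons' nth_append)

lemma vertices_single: "vertices [Node d cs] = insert [0] (Cons 0 ` vertices cs)"
proof -
  have "is_vertex [Node d cs] x \<longleftrightarrow> x = [0] \<or> (\<exists>p. is_vertex cs p \<and> x = 0 # p)" for x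
    apply (cases x) apply simp
    subgoal for i p by (cases p) (auto simp: is_vertex_Cons')
    done
  then show ?thesis by (auto simp: vertices_def)
qed

lemma decoration_single0[simp]: "decoration [Node d cs] [0] = d" by simp
lemma decoration_single1: "p \<noteq> [] \<Longrightarrow> decoration [Node d cs] (0 # p) = decoration cs p" by simp

lemma vertices_Cons: "vertices (t # ts) = vertices [t] \<union> shift 1 ` vertices ts"
  using vertices_append[of "[t]" ts] by simp

lemma finite_vertices: "finite (vertices F)"
proof (induction F rule: measure_induct_rule[of "size_list size"])
  case (less F)
  show ?case
  proof (cases F)
    case Nil then show ?thesis by simp
  next
    case (Cons t ts)
    obtain d cs where t: "t = Node d cs" by (cases t)
    have "finite (vertices cs)" by (rule less) (simp add: Cons t)
    moreover have "finite (vertices ts)" by (rule less) (simp add: Cons t)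
    ultimately show ?thesis unfolding Cons t vertices_Cons[of "Node d cs" ts] vertices_single by simp
  qed
qed


definition Iset :: "nat list set \<Rightarrow> (nat list \<Rightarrow> 'd) \<Rightarrow> nat list set \<Rightarrow> (nat list \<Rightarrow> 'd) \<Rightarrow> (nat list \<Rightarrow> nat list) set" where
 "Iset V D W E = {f \<in> V \<rightarrow>\<^sub>E W. bij_betw f V W \<and>
   (\<forall>x\<in>V. \<forall>y\<in>V. prefix y x \<longrightarrow> gauche_path_ge (f x) (f y)) \<and>
   (\<forall>x\<in>V. \<forall>y\<in>V. prefix (f y) (f x) \<longrightarrow> gauche_path_ge x y) \<and>
   (\<forall>x\<in>V. E (f x) = D x)}"

lemma I_set_Iset: "I_set F G = Iset (vertices F) (decoration F) (vertices G) (decoration G)"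
  unfolding I_set_def Iset_def haut_ge_def gauche_ge_def
  by (rule Collect_cong) (auto simp: PiE_iff)

definition iso :: "nat list set \<Rightarrow> (nat list \<Rightarrow> 'd) \<Rightarrow> nat list set \<Rightarrow> (nat list \<Rightarrow> 'd) \<Rightarrow> bool" where
 "iso V D W E \<longleftrightarrow> (\<exists>\<phi>. bij_betw \<phi> V W \<and>
    (\<forall>x\<in>V. \<forall>y\<in>V. (prefix x y \<longleftrightarrow> prefix (\<phi> x) (\<phi> y)) \<and> (gauche_path_ge x y \<longleftrightarrow> gauche_path_ge (\<phi> x) (\<phi> y))) \<and>
    (\<forall>x\<in>V. E (\<phi> x) = D x))"

lemma isoI:
  assumes "bij_betw \<phi> V W"
    and "\<And>x y. x \<in> V \<Longrightarrow> y \<in> V \<Longrightarrow> prefix x y \<longleftrightarrow> prefix (\<phi> x) (\<phi> y)"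
    and "\<And>x y. x \<in> V \<Longrightarrow> y \<in> V \<Longrightarrow> gauche_path_ge x y \<longleftrightarrow> gauche_path_ge (\<phi> x) (\<phi> y)"
    and "\<And>x. x \<in> V \<Longrightarrow> E (\<phi> x) = D x"
  shows "iso V D W E"
  unfolding iso_def using assms by blast

lemma iso_refl: "iso V D V D"
  by (rule isoI[of id]) auto

lemma iso_sym: assumes "iso V D W E" shows "iso W E V D"
proof -
  obtain \<phi> where b: "bij_betw \<phi> V W" and r: "\<forall>x\<in>V. \<forall>y\<in>V. (prefix x y \<longleftrightarrow> prefix (\<phi> x) (\<phi> y)) \<and> (gauche_path_ge x y \<longleftrightarrow> gauche_path_ge (\<phi> x) (\<phi> y))"
    and d: "\<forall>x\<in>V. E (\<phi> x) = D x"
    using assms unfolding iso_def by blast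
  let ?p = "inv_into V \<phi>"
  have b2: "bij_betw ?p W V" by (rule bij_betw_inv_into[OF b])
  have fi: "\<phi> (?p y) = y" if "y \<in> W" for y
    using b that by (simp add: bij_betw_def f_inv_into_f)
  have pin: "?p y \<in> V" if "y \<in> W" for y using b2 that by (auto simp: bij_betw_def)
  show ?thesis
  proof (rule isoI[OF b2])
    fix x y assume "x \<in> W" "y \<in> W"
    then show "prefix x y \<longleftrightarrow> prefix (?p x) (?p y)" "gauche_path_ge x y \<longleftrightarrow> gauche_path_ge (?p x) (?p y)"
      using r pin fi by metis+
  next
    fix x assume "x \<in> W" then show "D (?p x) = E x" using d pin fi by metis
  qed
qed

lemma iso_trans: assumes "iso U C V D" "iso V D W E" shows "iso U C W E"
proof -
  obtain \<phi> where b: "bij_betw \<phi> U V" and r: "\<forall>x\<in>U. \<forall>y\<in>U. (prefix x y \<longleftrightarrow> prefix (\<phi> x) (\<phi> y)) \<and> (gauche_path_ge x y \<longleftrightarrow> gauche_path_ge (\<phi> x) (\<phi> y))"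
    and d: "\<forall>x\<in>U. D (\<phi> x) = C x"
    using assms(1) unfolding iso_def by blast
  obtain \<psi> where b2: "bij_betw \<psi> V W" and r2: "\<forall>x\<in>V. \<forall>y\<in>V. (prefix x y \<longleftrightarrow> prefix (\<psi> x) (\<psi> y)) \<and> (gauche_path_ge x y \<longleftrightarrow> gauche_path_ge (\<psi> x) (\<psi> y))"
    and d2: "\<forall>x\<in>V. E (\<psi> x) = D x"
    using assms(2) unfolding iso_def by blast
  have m: "\<phi> x \<in> V" if "x \<in> U" for x using b that by (auto simp: bij_betw_def)
  show ?thesis
  proof (rule isoI[of "\<psi> \<circ> \<phi>"])
    show "bij_betw (\<psi> \<circ> \<phi>) U W" by (rule bij_betw_trans[OF b b2])
  qed (use r r2 d d2 m in auto)
qed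

lemma iso_dec: assumes "iso V D W E" "\<And>x. x \<in> V \<Longrightarrow> D x = D' x" "\<And>y. y \<in> W \<Longrightarrow> E y = E' y"
  shows "iso V D' W E'"
proof -
  obtain \<phi> where b: "bij_betw \<phi> V W" and r: "\<forall>x\<in>V. \<forall>y\<in>V. (prefix x y \<longleftrightarrow> prefix (\<phi> x) (\<phi> y)) \<and> (gauche_path_ge x y \<longleftrightarrow> gauche_path_ge (\<phi> x) (\<phi> y))"
    and d: "\<forall>x\<in>V. E (\<phi> x) = D x"
    using assms(1) unfolding iso_def by blast
  have m: "\<phi> x \<in> W" if "x \<in> V" for x using b that by (auto simp: bij_betw_def)
  show ?thesis by (rule isoI[OF b]) (use r d m assms(2,3) in auto)
qed

lemma iso_finite: "iso V D W E \<Longrightarrow> finite V \<longleftrightarrow> finite W"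
  unfolding iso_def using bij_betw_finite by blast

lemma finite_Iset: "finite V \<Longrightarrow> finite W \<Longrightarrow> finite (Iset V D W E)"
  by (rule finite_subset[of _ "V \<rightarrow>\<^sub>E W"]) (auto simp: Iset_def intro: finite_PiE)

lemma Iset_right_le:
  assumes fin: "finite V" "finite W'" and iso: "iso W E W' E'"
  shows "card (Iset V D W E) \<le> card (Iset V D W' E')"
proof -
  obtain \<phi> where b: "bij_betw \<phi> W W'" and r: "\<forall>x\<in>W. \<forall>y\<in>W. (prefix x y \<longleftrightarrow> prefix (\<phi> x) (\<phi> y)) \<and> (gauche_path_ge x y \<longleftrightarrow> gauche_path_ge (\<phi> x) (\<phi> y))"
    and d: "\<forall>x\<in>W. E' (\<phi> x) = E x"
    using iso unfolding iso_def by blast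
  have m: "\<phi> x \<in> W'" if "x \<in> W" for x using b that by (auto simp: bij_betw_def)
  have inj: "inj_on \<phi> W" using b by (auto simp: bij_betw_def)
  let ?m = "\<lambda>f. restrict (\<phi> \<circ> f) V"
  have "inj_on ?m (Iset V D W E)"
  proof (rule inj_onI)
    fix f g assume f: "f \<in> Iset V D W E" and g: "g \<in> Iset V D W E" and e: "?m f = ?m g"
    show "f = g"
    proof (rule extensionalityI[of _ V])
      show "f \<in> extensional V" "g \<in> extensional V" using f g by (auto simp: Iset_def PiE_iff)
    next
      fix x assume x: "x \<in> V"
      then have "\<phi> (f x) = \<phi> (g x)" using fun_cong[OF e, of x] by simp
      moreover have "f x \<in> W" "g x \<in> W" using f g x by (auto simp: Iset_def)
      ultimately show "f x = g x" using inj by (auto dest: inj_onD)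
    qed
  qed
  moreover have "?m ` Iset V D W E \<subseteq> Iset V D W' E'"
  proof
    fix h assume "h \<in> ?m ` Iset V D W E"
    then obtain f where f: "f \<in> Iset V D W E" and h: "h = ?m f" by blast
    from f have fP: "f \<in> V \<rightarrow>\<^sub>E W" and fb: "bij_betw f V W"
      and c1: "\<forall>x\<in>V. \<forall>y\<in>V. prefix y x \<longrightarrow> gauche_path_ge (f x) (f y)"
      and c2: "\<forall>x\<in>V. \<forall>y\<in>V. prefix (f y) (f x) \<longrightarrow> gauche_path_ge x y"
      and c3: "\<forall>x\<in>V. E (f x) = D x" unfolding Iset_def by auto
    have fx: "f x \<in> W" if "x \<in> V" for x using fP that by auto
    have hb: "bij_betw h V W'"
      using bij_betw_trans[OF fb b] h by (auto intro: bij_betw_cong[THEN iffD1])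
    show "h \<in> Iset V D W' E'"
      unfolding Iset_def using fx m c1 c2 c3 r d hb h by auto
  qed
  ultimately show ?thesis using fin by (intro card_inj_on_le) (auto intro: finite_Iset)
qed

lemma Iset_left_le:
  assumes fin: "finite V'" "finite W" and iso: "iso V D V' D'"
  shows "card (Iset V D W E) \<le> card (Iset V' D' W E)"
proof -
  obtain \<psi> where b: "bij_betw \<psi> V' V" and r: "\<forall>x\<in>V'. \<forall>y\<in>V'. (prefix x y \<longleftrightarrow> prefix (\<psi> x) (\<psi> y)) \<and> (gauche_path_ge x y \<longleftrightarrow> gauche_path_ge (\<psi> x) (\<psi> y))"
    and d: "\<forall>x\<in>V'. D (\<psi> x) = D' x"
    using iso_sym[OF iso] unfolding iso_def by blast
  have m: "\<psi> x \<in> V" if "x \<in> V'" for x using b that by (auto simp: bij_betw_def)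
  have sur: "\<exists>x'\<in>V'. \<psi> x' = x" if "x \<in> V" for x using b that by (auto simp: bij_betw_def)
  let ?m = "\<lambda>f. restrict (f \<circ> \<psi>) V'"
  have "inj_on ?m (Iset V D W E)"
  proof (rule inj_onI)
    fix f g assume f: "f \<in> Iset V D W E" and g: "g \<in> Iset V D W E" and e: "?m f = ?m g"
    show "f = g"
    proof (rule extensionalityI[of _ V])
      show "f \<in> extensional V" "g \<in> extensional V" using f g by (auto simp: Iset_def PiE_iff)
    next
      fix x assume x: "x \<in> V"
      then obtain x' where "x' \<in> V'" "\<psi> x' = x" using sur by blast
      then show "f x = g x" using fun_cong[OF e, of x'] by simp
    qed
  qed
  moreover have "?m ` Iset V D W E \<subseteq> Iset V' D' W E"
  proof
    fix h assume "h \<in> ?m ` Iset V D W E"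
    then obtain f where f: "f \<in> Iset V D W E" and h: "h = ?m f" by blast
    from f have fP: "f \<in> V \<rightarrow>\<^sub>E W" and fb: "bij_betw f V W"
      and c1: "\<forall>x\<in>V. \<forall>y\<in>V. prefix y x \<longrightarrow> gauche_path_ge (f x) (f y)"
      and c2: "\<forall>x\<in>V. \<forall>y\<in>V. prefix (f y) (f x) \<longrightarrow> gauche_path_ge x y"
      and c3: "\<forall>x\<in>V. E (f x) = D x" unfolding Iset_def by auto
    have fx: "f x \<in> W" if "x \<in> V" for x using fP that by auto
    have hb: "bij_betw h V' W"
      using bij_betw_trans[OF b fb] h by (auto intro: bij_betw_cong[THEN iffD1])
    show "h \<in> Iset V' D' W E"
      unfolding Iset_def using fx m c1 c2 c3 r d hb h by auto
  qed
  ultimately show ?thesis using fin by (intro card_inj_on_le) (auto intro: finite_Iset)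
qed

lemma card_Iset_right:
  assumes "finite V" "finite W" "iso W E W' E'"
  shows "card (Iset V D W E) = card (Iset V D W' E')"
proof -
  have "finite W'" using assms iso_finite by blast
  then show ?thesis using assms Iset_right_le[of V W' W E E' D] Iset_right_le[of V W W' E' E D] iso_sym
    by (meson antisym)
qed

lemma card_Iset_left:
  assumes "finite V" "finite W" "iso V D V' D'"
  shows "card (Iset V D W E) = card (Iset V' D' W E)"
proof -
  have "finite V'" using assms iso_finite by blast
  then show ?thesis using assms Iset_left_le[of V' W V D D' E] Iset_left_le[of V W V' D' D E] iso_sym
    by (meson antisym)
qed


lemma gauche_refl: "x \<noteq> [] \<Longrightarrow> gauche_path_ge x x"
  by (cases x) auto

lemma prefix_shift[simp]: "prefix (shift n x) (shift n y) \<longleftrightarrow> prefix x y"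
  by (cases x; cases y) auto

lemma gauche_shift[simp]: "gauche_path_ge (shift n x) (shift n y) \<longleftrightarrow> gauche_path_ge x y"
  by (cases x; cases y) auto

lemma gauche_Cons_same: "x \<noteq> [] \<Longrightarrow> y \<noteq> [] \<Longrightarrow> gauche_path_ge (a # x) (a # y) \<longleftrightarrow> gauche_path_ge x y"
  using gauche_refl by auto

lemma inj_shift: "inj (shift n)"
proof (rule injI)
  fix x y assume "shift n x = shift n y" then show "x = y" by (cases x; cases y) auto
qed

lemma shift_inj_eq[simp]: "shift n x = shift n y \<longleftrightarrow> x = y"
  using inj_shift by (simp add: inj_eq)

lemma iso_shift: "(\<And>v. v \<in> V \<Longrightarrow> E (shift n v) = D v) \<Longrightarrow> iso V D (shift n ` V) E"
  by (rule isoI[of "shift n"]) (auto intro: inj_on_subset[OF inj_shift] simp: bij_betw_def)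

lemma iso_cons0: assumes "\<And>v. v \<in> V \<Longrightarrow> v \<noteq> [] \<and> E (0 # v) = D v" shows "iso V D (Cons 0 ` V) E"
proof (rule isoI[of "Cons 0"])
  fix x y assume "x \<in> V" "y \<in> V"
  then have "x \<noteq> []" "y \<noteq> []" using assms by auto
  then show "gauche_path_ge x y \<longleftrightarrow> gauche_path_ge (0 # x) (0 # y)" by (rule gauche_Cons_same[symmetric])
qed (use assms in \<open>auto simp: bij_betw_def\<close>)

lemma iso_union:
  assumes i1: "iso V1 D W1 E" and i2: "iso V2 D W2 E" and dv: "V1 \<inter> V2 = {}" and dw: "W1 \<inter> W2 = {}"
    and pat: "\<And>x y a b. x \<in> V1 \<Longrightarrow> y \<in> V2 \<Longrightarrow> a \<in> W1 \<Longrightarrow> b \<in> W2 \<Longrightarrow>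
      (prefix x y \<longleftrightarrow> prefix a b) \<and> (prefix y x \<longleftrightarrow> prefix b a) \<and>
      (gauche_path_ge x y \<longleftrightarrow> gauche_path_ge a b) \<and> (gauche_path_ge y x \<longleftrightarrow> gauche_path_ge b a)"
  shows "iso (V1 \<union> V2) D (W1 \<union> W2) E"
proof -
  obtain \<phi> where b: "bij_betw \<phi> V1 W1" and r: "\<forall>x\<in>V1. \<forall>y\<in>V1. (prefix x y \<longleftrightarrow> prefix (\<phi> x) (\<phi> y)) \<and> (gauche_path_ge x y \<longleftrightarrow> gauche_path_ge (\<phi> x) (\<phi> y))"
    and d: "\<forall>x\<in>V1. E (\<phi> x) = D x"
    using i1 unfolding iso_def by blast
  obtain \<psi> where b2: "bij_betw \<psi> V2 W2" and r2: "\<forall>x\<in>V2. \<forall>y\<in>V2. (prefix x y \<longleftrightarrow> prefix (\<psi> x) (\<psi> y)) \<and> (gauche_path_ge x y \<longleftrightarrow> gauche_path_ge (\<psi> x) (\<psi> y))"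
    and d2: "\<forall>x\<in>V2. E (\<psi> x) = D x"
    using i2 unfolding iso_def by blast
  have m1: "\<phi> x \<in> W1" if "x \<in> V1" for x using b that by (auto simp: bij_betw_def)
  have m2: "\<psi> x \<in> W2" if "x \<in> V2" for x using b2 that by (auto simp: bij_betw_def)
  let ?h = "\<lambda>x. if x \<in> V1 then \<phi> x else \<psi> x"
  have n2: "x \<notin> V1" if "x \<in> V2" for x using dv that by auto
  have "bij_betw ?h V1 W1" using b by (rule bij_betw_cong[THEN iffD1, rotated]) auto
  moreover have "bij_betw ?h V2 W2" using b2 by (rule bij_betw_cong[THEN iffD1, rotated]) (use n2 in auto)
  ultimately have bh: "bij_betw ?h (V1 \<union> V2) (W1 \<union> W2)" using dw by (rule bij_betw_combine)
  show ?thesis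
  proof (rule isoI[OF bh])
    fix x y assume x: "x \<in> V1 \<union> V2" and y: "y \<in> V1 \<union> V2"
    have h1: "?h z = \<phi> z" if "z \<in> V1" for z using that by simp
    have h2: "?h z = \<psi> z" if "z \<in> V2" for z using that n2 by simp
    consider "x \<in> V1" "y \<in> V1" | "x \<in> V1" "y \<in> V2" | "x \<in> V2" "y \<in> V1" | "x \<in> V2" "y \<in> V2"
      using x y by blast
    then have "(prefix x y \<longleftrightarrow> prefix (?h x) (?h y)) \<and> (gauche_path_ge x y \<longleftrightarrow> gauche_path_ge (?h x) (?h y))"
    proof cases
      case 1 then show ?thesis using r h1 by simp
    next
      case 2 then show ?thesis using pat[of x y "\<phi> x" "\<psi> y"] h1 h2 m1 m2 by simp
    next
      case 3 then show ?thesis using pat[of y x "\<phi> y" "\<psi> x"] h1 h2 m1 m2 by simp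
    next
      case 4 then show ?thesis using r2 h2 by simp
    qed
    then show "prefix x y \<longleftrightarrow> prefix (?h x) (?h y)" "gauche_path_ge x y \<longleftrightarrow> gauche_path_ge (?h x) (?h y)"
      by auto
  next
    fix x assume "x \<in> V1 \<union> V2" then show "E (?h x) = D x" using d d2 n2 by auto
  qed
qed

section \<open>Descendant-closed subsets\<close>

definition DCs :: "nat list set \<Rightarrow> nat list set set" where
  "DCs W = {A. A \<subseteq> W \<and> (\<forall>a\<in>A. \<forall>b\<in>W - A. \<not> prefix a b)}"

lemma DCs_union:
  assumes "X \<inter> Y = {}" "\<And>x y. x \<in> X \<Longrightarrow> y \<in> Y \<Longrightarrow> \<not> prefix x y \<and> \<not> prefix y x"
  shows "DCs (X \<union> Y) = (\<lambda>(A, B). A \<union> B) ` (DCs X \<times> DCs Y)"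
proof
  show "DCs (X \<union> Y) \<subseteq> (\<lambda>(A, B). A \<union> B) ` (DCs X \<times> DCs Y)"
  proof
    fix A assume A: "A \<in> DCs (X \<union> Y)"
    have "A \<inter> X \<in> DCs X" "A \<inter> Y \<in> DCs Y" using A by (auto simp: DCs_def)
    moreover have "A = (\<lambda>(A, B). A \<union> B) (A \<inter> X, A \<inter> Y)" using A by (auto simp: DCs_def)
    ultimately show "A \<in> (\<lambda>(A, B). A \<union> B) ` (DCs X \<times> DCs Y)" by blast
  qed
next
  show "(\<lambda>(A, B). A \<union> B) ` (DCs X \<times> DCs Y) \<subseteq> DCs (X \<union> Y)"
    using assms by (auto simp: DCs_def)
qed

lemma inj_union: "X \<inter> Y = {} \<Longrightarrow> inj_on (\<lambda>(A, B). A \<union> B) (DCs X \<times> DCs Y)"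
proof (rule inj_onI, clarify)
  fix A B A' B' assume d: "X \<inter> Y = {}" and "A \<in> DCs X" "B \<in> DCs Y" "A' \<in> DCs X" "B' \<in> DCs Y"
    and e: "A \<union> B = A' \<union> B'"
  then have s: "A \<subseteq> X" "B \<subseteq> Y" "A' \<subseteq> X" "B' \<subseteq> Y" by (auto simp: DCs_def)
  have "A = (A \<union> B) \<inter> X" "A' = (A' \<union> B') \<inter> X" "B = (A \<union> B) \<inter> Y" "B' = (A' \<union> B') \<inter> Y"
    using s d by auto
  then show "A = A' \<and> B = B'" using e by metis
qed

lemma DCs_image:
  assumes "inj_on h X" "\<And>x y. x \<in> X \<Longrightarrow> y \<in> X \<Longrightarrow> prefix (h x) (h y) \<longleftrightarrow> prefix x y"
  shows "DCs (h ` X) = image h ` DCs X"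
proof
  show "DCs (h ` X) \<subseteq> image h ` DCs X"
  proof
    fix A assume A: "A \<in> DCs (h ` X)"
    let ?B = "{x \<in> X. h x \<in> A}"
    have "A = h ` ?B" using A by (auto simp: DCs_def)
    moreover have "?B \<in> DCs X"
      using A assms by (auto simp: DCs_def) (metis DiffI imageI inj_on_image_mem_iff)
    ultimately show "A \<in> image h ` DCs X" by blast
  qed
next
  show "image h ` DCs X \<subseteq> DCs (h ` X)"
    using assms by (auto simp: DCs_def) (metis DiffI inj_on_image_mem_iff subsetD)
qed

lemma DCs_root:
  assumes ne: "\<And>v. v \<in> V \<Longrightarrow> v \<noteq> []"
  shows "DCs (insert [0] (Cons 0 ` V)) = insert (insert [0] (Cons 0 ` V)) (image (Cons 0) ` DCs V)"
proof
  show "DCs (insert [0] (Cons 0 ` V)) \<subseteq> insert (insert [0] (Cons 0 ` V)) (image (Cons 0) ` DCs V)"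
  proof
    fix A assume A: "A \<in> DCs (insert [0] (Cons 0 ` V))"
    show "A \<in> insert (insert [0] (Cons 0 ` V)) (image (Cons 0) ` DCs V)"
    proof (cases "[0] \<in> A")
      case True
      have "0 # v \<in> A" if "v \<in> V" for v
      proof (rule ccontr)
        assume "0 # v \<notin> A"
        then have "0 # v \<in> insert [0] (Cons 0 ` V) - A" using that by auto
        moreover have "prefix [0] (0 # v)" by simp
        ultimately show False using A True unfolding DCs_def by blast
      qed
      then have "A = insert [0] (Cons 0 ` V)" using A True by (auto simp: DCs_def)
      then show ?thesis by simp
    next
      case False
      have "image (Cons 0) ` DCs V = DCs (Cons 0 ` V)"
        by (rule DCs_image[symmetric]) auto
      moreover have "A \<in> DCs (Cons 0 ` V)" using A False by (auto simp: DCs_def)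
      ultimately show ?thesis by simp
    qed
  qed
next
  have "image (Cons 0) ` DCs V = DCs (Cons 0 ` V)"
    by (rule DCs_image[symmetric]) auto
  moreover have "DCs (Cons 0 ` V) \<subseteq> DCs (insert [0] (Cons 0 ` V))"
    using ne by (auto simp: DCs_def)
  ultimately show "insert (insert [0] (Cons 0 ` V)) (image (Cons 0) ` DCs V) \<subseteq> DCs (insert [0] (Cons 0 ` V))"
    by (auto simp: DCs_def)
qed


definition rls :: "('a \<Rightarrow> 'b \<Rightarrow> bool) \<Rightarrow> 'a list \<Rightarrow> 'b set \<Rightarrow> bool" where
  "rls R xs S \<longleftrightarrow> (\<exists>ys. list_all2 R xs ys \<and> distinct ys \<and> set ys = S)"

lemma rls_Cons: "R x s \<Longrightarrow> s \<notin> S \<Longrightarrow> rls R xs S \<Longrightarrow> rls R (x # xs) (insert s S)"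
  unfolding rls_def by (metis distinct.simps(2) list.simps(15) list_all2_Cons)

lemma rls_single: "R x s \<Longrightarrow> rls R [x] {s}"
  unfolding rls_def by (intro exI[of _ "[s]"]) auto

lemma rls_append: "rls R xs S \<Longrightarrow> rls R ys T \<Longrightarrow> S \<inter> T = {} \<Longrightarrow> rls R (xs @ ys) (S \<union> T)"
  unfolding rls_def by (metis distinct_append list_all2_appendI set_append)

lemma rls_map:
  assumes "rls R' xs S" "inj_on k S" "\<And>a x. x \<in> S \<Longrightarrow> R' a x \<Longrightarrow> R (f a) (k x)"
  shows "rls R (map f xs) (k ` S)"
proof -
  obtain ys where y: "list_all2 R' xs ys" "distinct ys" "set ys = S" using assms(1) unfolding rls_def by blast
  have "list_all2 R (map f xs) (map k ys)"
    using y(1) assms(3) y(3) by (auto simp: list_all2_conv_all_nth)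
  moreover have "distinct (map k ys)" using y assms(2) by (simp add: distinct_map)
  ultimately show ?thesis unfolding rls_def using y(3) by (intro exI[of _ "map k ys"]) auto
qed

lemma rls_prod:
  assumes r1: "rls R1 xs S1" and r2: "rls R2 ys S2" and inj: "inj_on k (S1 \<times> S2)"
    and c: "\<And>a b x y. x \<in> S1 \<Longrightarrow> y \<in> S2 \<Longrightarrow> R1 a x \<Longrightarrow> R2 b y \<Longrightarrow> R (h a b) (k (x, y))"
  shows "rls R (concat (map (\<lambda>a. map (h a) ys) xs)) (k ` (S1 \<times> S2))"
proof -
  obtain us where u: "list_all2 R1 xs us" "distinct us" "set us = S1" using r1 unfolding rls_def by blast
  have "rls R (concat (map (\<lambda>a. map (h a) ys) xs)) (k ` (set us \<times> S2))"
    if "list_all2 R1 xs us" "distinct us" "set us \<subseteq> S1" for us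
    using that
  proof (induction xs arbitrary: us)
    case Nil then show ?case by (simp add: rls_def)
  next
    case (Cons x xs)
    then obtain u us' where us: "us = u # us'" and ru: "R1 x u" and rest: "list_all2 R1 xs us'"
      by (cases us) auto
    have IH: "rls R (concat (map (\<lambda>a. map (h a) ys) xs)) (k ` (set us' \<times> S2))"
      using Cons.IH[OF rest] Cons.prems us by auto
    have injs: "inj_on (\<lambda>y. k (u, y)) S2"
      using inj Cons.prems us by (auto simp: inj_on_def)
    have m: "rls R (map (h x) ys) ((\<lambda>y. k (u, y)) ` S2)"
      by (rule rls_map[OF r2 injs]) (use c ru Cons.prems us in auto)
    have d: "(\<lambda>y. k (u, y)) ` S2 \<inter> k ` (set us' \<times> S2) = {}"
      using inj Cons.prems us by (auto simp: inj_on_def)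
    have e: "(\<lambda>y. k (u, y)) ` S2 \<union> k ` (set us' \<times> S2) = k ` (set us \<times> S2)"
      using us by auto
    show ?case using rls_append[OF m IH d] e by simp
  qed
  then show ?thesis using u by auto
qed

lemma rls_sum:
  assumes "rls R xs S" "\<And>a x. x \<in> S \<Longrightarrow> R a x \<Longrightarrow> h a = H x"
  shows "sum_list (map h xs) = sum H S"
proof -
  obtain ys where y: "list_all2 R xs ys" "distinct ys" "set ys = S" using assms(1) unfolding rls_def by blast
  have "map h xs = map H ys"
    using y(1) y(3) assms(2) by (auto simp: list_all2_conv_all_nth intro!: nth_equalityI)
  then show ?thesis using y by (simp add: sum_list_distinct_conv_sum_set)
qed


section \<open>Cuts correspond to descendant-closed sets\<close>

lemma coprod_Nil: "coprod [] = [([], [])]"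
  by (simp add: coprod_def)

lemma coprod_Cons: "coprod (t # ts) =
  concat (map (\<lambda>a. map (\<lambda>b. (fst a @ fst b, snd a @ snd b)) (coprod ts)) (tree_cuts t))"
  by (simp add: coprod_def split_def)

lemma rcuts_eq: "rcuts (Node d ts) = map (\<lambda>(p, rs). (p, Node d rs)) (coprod ts)"
  by (simp add: coprod_def tree_cuts_def[abs_def])

lemma tree_cuts_Node: "tree_cuts (Node d cs) = ([Node d cs], []) # map (\<lambda>(p, rs). (p, [Node d rs])) (coprod cs)"
  by (simp add: tree_cuts_def rcuts_eq split_def comp_def del: rcuts.simps)

lemma iso_empty: "iso {} D {} E"
  by (rule isoI[of id]) auto

lemma cross_app:
  assumes "x \<in> vertices F1" "y \<in> shift (length F1) ` vertices F2"
  shows "\<not> prefix x y \<and> \<not> prefix y x \<and> gauche_path_ge x y \<and> \<not> gauche_path_ge y x \<and> x \<noteq> y"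
proof -
  obtain i p where x: "x = i # p" "i < length F1" using assms(1) by (cases x) (auto simp: vertices_def)
  obtain j q where y: "y = (length F1 + j) # q" using assms(2) vertices_ne by (metis imageE neq_Nil_conv shift_Cons)
  show ?thesis using x y by auto
qed

lemma iso_app:
  assumes i1: "iso (vertices p) (decoration p) B1 E" and i2: "iso (vertices q) (decoration q) B2 E"
    and cr: "\<And>a b. a \<in> B1 \<Longrightarrow> b \<in> B2 \<Longrightarrow> \<not> prefix a b \<and> \<not> prefix b a \<and> gauche_path_ge a b \<and> \<not> gauche_path_ge b a \<and> a \<noteq> b"
  shows "iso (vertices (p @ q)) (decoration (p @ q)) (B1 \<union> B2) E"
proof -
  have a: "iso (vertices p) (decoration (p @ q)) B1 E"
    by (rule iso_dec[OF i1]) (auto simp: decoration_append1)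
  have "iso (vertices q) (decoration q) (shift (length p) ` vertices q) (decoration (p @ q))"
    by (rule iso_shift) (simp add: decoration_append2)
  then have b: "iso (shift (length p) ` vertices q) (decoration (p @ q)) B2 E"
    using i2 iso_sym iso_trans by blast
  have "iso (vertices p \<union> shift (length p) ` vertices q) (decoration (p @ q)) (B1 \<union> B2) E"
  proof (rule iso_union[OF a b])
    show "vertices p \<inter> shift (length p) ` vertices q = {}" using cross_app by blast
    show "B1 \<inter> B2 = {}" using cr by blast
  next
    fix x y a b assume "x \<in> vertices p" "y \<in> shift (length p) ` vertices q" "a \<in> B1" "b \<in> B2"
    then show "(prefix x y \<longleftrightarrow> prefix a b) \<and> (prefix y x \<longleftrightarrow> prefix b a) \<and>
      (gauche_path_ge x y \<longleftrightarrow> gauche_path_ge a b) \<and> (gauche_path_ge y x \<longleftrightarrow> gauche_path_ge b a)"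
      using cross_app[of x p y q] cr[of a b] by blast
  qed
  then show ?thesis by (simp add: vertices_append)
qed

lemma iso_root:
  assumes i: "iso V D B E" and nv: "\<And>v. v \<in> V \<Longrightarrow> v \<noteq> []" and nb: "\<And>b. b \<in> B \<Longrightarrow> b \<noteq> []"
    and r: "D1 [0] = E1 [0]" and dv: "\<And>v. v \<in> V \<Longrightarrow> D1 (0 # v) = D v"
    and db: "\<And>b. b \<in> B \<Longrightarrow> E1 (0 # b) = E b"
  shows "iso (insert [0] (Cons 0 ` V)) D1 (insert [0] (Cons 0 ` B)) E1"
proof -
  have a: "iso {[0]} D1 {[0]} E1" by (rule isoI[of id]) (auto simp: r)
  have "iso (Cons 0 ` V) D1 V D" using iso_cons0[of V D1 D] nv dv iso_sym by metis
  moreover have "iso B E (Cons 0 ` B) E1" using iso_cons0[of B E1 E] nb db by metis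
  ultimately have b: "iso (Cons 0 ` V) D1 (Cons 0 ` B) E1" using i iso_trans by metis
  have "iso ({[0]} \<union> Cons 0 ` V) D1 ({[0]} \<union> Cons 0 ` B) E1"
  proof (rule iso_union[OF a b])
    fix x y a b :: "nat list" assume as: "x \<in> {[0]}" "y \<in> Cons 0 ` V" "a \<in> {[0]}" "b \<in> Cons 0 ` B"
    show "(prefix x y \<longleftrightarrow> prefix a b) \<and> (prefix y x \<longleftrightarrow> prefix b a) \<and>
      (gauche_path_ge x y \<longleftrightarrow> gauche_path_ge a b) \<and> (gauche_path_ge y x \<longleftrightarrow> gauche_path_ge b a)"
    proof -
      from as obtain v c where "x = [0]" "a = [0]" "y = 0 # v" "b = 0 # c" "v \<noteq> []" "c \<noteq> []"
        using nv nb by blast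
      then show ?thesis by simp
    qed
  qed (use nv nb in auto)
  then show ?thesis by simp
qed

definition Rc :: "'d pforest \<Rightarrow> 'd pforest \<times> 'd pforest \<Rightarrow> nat list set \<Rightarrow> bool" where
  "Rc G c A \<longleftrightarrow> iso (vertices (fst c)) (decoration (fst c)) A (decoration G) \<and>
     iso (vertices (snd c)) (decoration (snd c)) (vertices G - A) (decoration G)"

lemma DCs_sub: "A \<in> DCs W \<Longrightarrow> A \<subseteq> W" by (simp add: DCs_def)

lemma tree_rls:
  assumes IH: "rls (Rc cs) (coprod cs) (DCs (vertices cs))"
  shows "rls (Rc [Node d cs]) (tree_cuts (Node d cs)) (DCs (vertices [Node d cs]))"
proof -
  let ?t = "Node d cs"
  let ?V = "vertices [?t]"
  have V: "?V = insert [0] (Cons 0 ` vertices cs)" by (rule vertices_single)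
  have D: "DCs ?V = insert ?V (image (Cons 0) ` DCs (vertices cs))"
    unfolding V by (rule DCs_root) (simp add: vertices_ne)
  have notin: "?V \<notin> image (Cons 0) ` DCs (vertices cs)"
  proof
    assume "?V \<in> image (Cons 0) ` DCs (vertices cs)"
    then obtain A where A: "?V = Cons 0 ` A" "A \<in> DCs (vertices cs)" by blast
    moreover have "[0] \<in> ?V" using V by simp
    ultimately have "[] \<in> A" by auto
    then have "[] \<in> vertices cs" using DCs_sub[OF A(2)] by blast
    then show False using vertices_ne by blast
  qed
  have injc: "inj_on (image (Cons 0)) (DCs (vertices cs))"
    by (rule inj_on_image) (auto intro: inj_onI)
  have m: "rls (Rc [?t]) (map (\<lambda>(p, rs). (p, [Node d rs])) (coprod cs)) (image (Cons 0) ` DCs (vertices cs))"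
  proof (rule rls_map[OF IH injc])
    fix c A assume A: "A \<in> DCs (vertices cs)" and rc: "Rc cs c A"
    obtain p rs where c: "c = (p, rs)" by (cases c)
    have As: "A \<subseteq> vertices cs" using A by (simp add: DCs_def)
    have i1: "iso (vertices p) (decoration p) A (decoration cs)"
     and i2: "iso (vertices rs) (decoration rs) (vertices cs - A) (decoration cs)" using rc c by (auto simp: Rc_def)
    have "iso A (decoration cs) (Cons 0 ` A) (decoration [?t])"
    proof (rule iso_cons0)
      fix v assume "v \<in> A"
      then have "v \<in> vertices cs" using As by blast
      then have "v \<noteq> []" by (rule vertices_ne)
      then show "v \<noteq> [] \<and> decoration [?t] (0 # v) = decoration cs v" by (simp add: decoration_single1)
    qed
    then have j1: "iso (vertices p) (decoration p) (Cons 0 ` A) (decoration [?t])" using i1 iso_trans by blast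
    have "iso (insert [0] (Cons 0 ` vertices rs)) (decoration [Node d rs]) (insert [0] (Cons 0 ` (vertices cs - A))) (decoration [?t])"
      by (rule iso_root[OF i2]) (auto simp: decoration_single1 dest: vertices_ne)
    moreover have "insert [0] (Cons 0 ` (vertices cs - A)) = ?V - Cons 0 ` A"
    proof -
      have n0: "[0] \<notin> Cons 0 ` A"
      proof
        assume "[0] \<in> Cons 0 ` A"
        then have "[] \<in> A" by auto
        then show False using As vertices_ne by blast
      qed
      have "inj (Cons (0::nat))" by (simp add: inj_on_def)
      then have "Cons 0 ` (vertices cs - A) = Cons 0 ` vertices cs - Cons 0 ` A" by (rule image_set_diff)
      then show ?thesis unfolding V using n0 by (simp add: insert_Diff_if)
    qed
    ultimately have j2: "iso (vertices [Node d rs]) (decoration [Node d rs]) (?V - Cons 0 ` A) (decoration [?t])"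
      by (simp add: vertices_single)
    show "Rc [?t] ((\<lambda>(p, rs). (p, [Node d rs])) c) (Cons 0 ` A)"
      using j1 j2 c by (simp add: Rc_def)
  qed
  have "Rc [?t] ([?t], []) ?V" unfolding Rc_def fst_conv snd_conv vertices_Nil Diff_cancel
    using iso_refl iso_empty by blast
  from rls_Cons[OF this notin m] show ?thesis by (simp add: tree_cuts_Node D)
qed

lemma coprod_rls: "rls (Rc G) (coprod G) (DCs (vertices G))"
proof (induction G rule: measure_induct_rule[of "size_list size"])
  case (less G)
  show ?case
  proof (cases G)
    case Nil
    have "DCs {} = {{}}" by (auto simp: DCs_def)
    then show ?thesis using Nil by (simp add: coprod_Nil rls_single Rc_def iso_empty)
  next
    case (Cons t ts)
    obtain d cs where t: "t = Node d cs" by (cases t)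
    have IHc: "rls (Rc cs) (coprod cs) (DCs (vertices cs))" by (rule less) (simp add: Cons t)
    have IHt: "rls (Rc ts) (coprod ts) (DCs (vertices ts))" by (rule less) (simp add: Cons t)
    have T: "rls (Rc [t]) (tree_cuts t) (DCs (vertices [t]))" using tree_rls[OF IHc] t by simp
    let ?S1 = "DCs (vertices [t])" and ?S2 = "DCs (vertices ts)"
    let ?k = "\<lambda>(A, B). A \<union> shift 1 ` B"
    have VC: "vertices (t # ts) = vertices [t] \<union> shift 1 ` vertices ts" by (rule vertices_Cons)
    have cr: "\<And>x y. x \<in> vertices [t] \<Longrightarrow> y \<in> shift 1 ` vertices ts \<Longrightarrow>
        \<not> prefix x y \<and> \<not> prefix y x \<and> gauche_path_ge x y \<and> \<not> gauche_path_ge y x \<and> x \<noteq> y"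
      using cross_app[of _ "[t]" _ ts] by simp
    have disj: "vertices [t] \<inter> shift 1 ` vertices ts = {}" using cr by blast
    have Dsh: "DCs (shift 1 ` vertices ts) = image (shift 1) ` ?S2"
      by (rule DCs_image) (auto intro: inj_on_subset[OF inj_shift])
    have DU: "DCs (vertices (t # ts)) = (\<lambda>(A, B). A \<union> B) ` (?S1 \<times> DCs (shift 1 ` vertices ts))"
      unfolding VC by (rule DCs_union[OF disj]) (use cr in blast)
    have "(\<lambda>(A, B). A \<union> B) ` (?S1 \<times> image (shift 1) ` ?S2) = ?k ` (?S1 \<times> ?S2)"
      by force
    then have DK: "DCs (vertices (t # ts)) = ?k ` (?S1 \<times> ?S2)" using DU Dsh by simp
    have inj: "inj_on ?k (?S1 \<times> ?S2)"
    proof (rule inj_onI, clarify)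
      fix A B A' B' assume "A \<in> ?S1" "B \<in> ?S2" "A' \<in> ?S1" "B' \<in> ?S2"
        and e: "A \<union> shift 1 ` B = A' \<union> shift 1 ` B'"
      then have s: "A \<subseteq> vertices [t]" "A' \<subseteq> vertices [t]" "B \<subseteq> vertices ts" "B' \<subseteq> vertices ts"
        by (auto simp: DCs_def)
      have sep: "\<And>X Y A B. X \<inter> Y = {} \<Longrightarrow> A \<subseteq> X \<Longrightarrow> B \<subseteq> Y \<Longrightarrow> A = (A \<union> B) \<inter> X \<and> B = (A \<union> B) - X"
        by blast
      have "shift 1 ` B \<subseteq> shift 1 ` vertices ts" "shift 1 ` B' \<subseteq> shift 1 ` vertices ts"
        using s by (auto intro: image_mono)
      then have "A = (A \<union> shift 1 ` B) \<inter> vertices [t]" "A' = (A' \<union> shift 1 ` B') \<inter> vertices [t]"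
        "shift 1 ` B = (A \<union> shift 1 ` B) - vertices [t]" "shift 1 ` B' = (A' \<union> shift 1 ` B') - vertices [t]"
        using sep[OF disj] s by metis+
      then have "A = A'" "shift 1 ` B = shift 1 ` B'" using e by metis+
      moreover then have "B = B'" using inj_shift by (simp add: inj_image_eq_iff)
      ultimately show "A = A' \<and> B = B'" by simp
    qed
    have "rls (Rc (t # ts)) (concat (map (\<lambda>a. map (\<lambda>b. (fst a @ fst b, snd a @ snd b)) (coprod ts)) (tree_cuts t)))
        (?k ` (?S1 \<times> ?S2))"
    proof (rule rls_prod[OF T IHt inj])
      fix a b A B assume A: "A \<in> ?S1" and B: "B \<in> ?S2" and ra: "Rc [t] a A" and rb: "Rc ts b B"
      have As: "A \<subseteq> vertices [t]" and Bs: "B \<subseteq> vertices ts" using A B by (auto simp: DCs_def)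
      have dec1: "decoration [t] x = decoration (t # ts) x" if "x \<in> vertices [t]" for x
        using decoration_append1[OF that, of ts] by simp
      have dec2: "decoration (t # ts) (shift 1 y) = decoration ts y" if "y \<in> vertices ts" for y
        using decoration_append2[OF that, of "[t]"] by simp
      have sh: "iso U (decoration ts) (shift 1 ` U) (decoration (t # ts))" if "U \<subseteq> vertices ts" for U
        by (rule iso_shift) (use that dec2 in auto)
      have p1: "iso (vertices (fst a)) (decoration (fst a)) A (decoration (t # ts))"
        using ra As dec1 by (auto simp: Rc_def intro: iso_dec)
      have p2: "iso (vertices (fst b)) (decoration (fst b)) (shift 1 ` B) (decoration (t # ts))"
        using rb sh[OF Bs] iso_trans by (auto simp: Rc_def)
      have q1: "iso (vertices (snd a)) (decoration (snd a)) (vertices [t] - A) (decoration (t # ts))"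
        using ra dec1 by (auto simp: Rc_def intro: iso_dec)
      have q2: "iso (vertices (snd b)) (decoration (snd b)) (shift 1 ` (vertices ts - B)) (decoration (t # ts))"
        using rb sh[of "vertices ts - B"] iso_trans by (auto simp: Rc_def)
      have "iso (vertices (fst a @ fst b)) (decoration (fst a @ fst b)) (A \<union> shift 1 ` B) (decoration (t # ts))"
        by (rule iso_app[OF p1 p2]) (use As Bs cr in blast)
      moreover have "iso (vertices (snd a @ snd b)) (decoration (snd a @ snd b))
          ((vertices [t] - A) \<union> shift 1 ` (vertices ts - B)) (decoration (t # ts))"
        by (rule iso_app[OF q1 q2]) (use cr in blast)
      moreover have "(vertices [t] - A) \<union> shift 1 ` (vertices ts - B) = vertices (t # ts) - ?k (A, B)"
        unfolding VC using disj As Bs inj_shift by (auto simp: inj_image_mem_iff)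
      ultimately show "Rc (t # ts) (fst a @ fst b, snd a @ snd b) (?k (A, B))"
        by (simp add: Rc_def)
    qed
    then show ?thesis using DK Cons by (simp add: coprod_Cons)
  qed
qed


section \<open>Splitting the source\<close>

lemma IsetD:
  assumes "f \<in> Iset V D W E"
  shows "f \<in> V \<rightarrow>\<^sub>E W" "bij_betw f V W"
    "\<And>x y. x \<in> V \<Longrightarrow> y \<in> V \<Longrightarrow> prefix y x \<Longrightarrow> gauche_path_ge (f x) (f y)"
    "\<And>x y. x \<in> V \<Longrightarrow> y \<in> V \<Longrightarrow> prefix (f y) (f x) \<Longrightarrow> gauche_path_ge x y"
    "\<And>x. x \<in> V \<Longrightarrow> E (f x) = D x"
  using assms unfolding Iset_def by auto

lemma IsetI:
  assumes "f \<in> V \<rightarrow>\<^sub>E W" "bij_betw f V W"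
    "\<And>x y. x \<in> V \<Longrightarrow> y \<in> V \<Longrightarrow> prefix y x \<Longrightarrow> gauche_path_ge (f x) (f y)"
    "\<And>x y. x \<in> V \<Longrightarrow> y \<in> V \<Longrightarrow> prefix (f y) (f x) \<Longrightarrow> gauche_path_ge x y"
    "\<And>x. x \<in> V \<Longrightarrow> E (f x) = D x"
  shows "f \<in> Iset V D W E"
  using assms unfolding Iset_def by auto

lemma card_Iset_split:
  assumes fin: "finite V1" "finite V2" "finite W" and d: "V1 \<inter> V2 = {}"
    and cr: "\<And>x y. x \<in> V1 \<Longrightarrow> y \<in> V2 \<Longrightarrow> \<not> prefix x y \<and> \<not> prefix y x \<and> gauche_path_ge x y \<and> \<not> gauche_path_ge y x"
  shows "card (Iset (V1 \<union> V2) D W E) = (\<Sum>A\<in>DCs W. card (Iset V1 D A E) * card (Iset V2 D (W - A) E))"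
proof -
  let ?I = "Iset (V1 \<union> V2) D W E"
  define \<Phi> where "\<Phi> A = {f \<in> ?I. f ` V1 = A}" for A
  have dc: "f ` V1 \<in> DCs W" if f: "f \<in> ?I" for f
  proof -
    have fb: "bij_betw f (V1 \<union> V2) W" using IsetD(2)[OF f] .
    have "f ` V1 \<subseteq> W" using fb by (auto simp: bij_betw_def)
    moreover have "\<not> prefix a b" if a: "a \<in> f ` V1" and b: "b \<in> W - f ` V1" for a b
    proof
      assume p: "prefix a b"
      obtain x where x: "x \<in> V1" "a = f x" using a by blast
      obtain y where y: "y \<in> V1 \<union> V2" "b = f y" using b fb by (auto simp: bij_betw_def)
      have "y \<notin> V1" using y b by auto
      then have "y \<in> V2" using y by auto
      have "gauche_path_ge y x" using IsetD(4)[OF f, of y x] x y p by auto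
      then show False using cr[OF x(1) \<open>y \<in> V2\<close>] by blast
    qed
    ultimately show ?thesis by (auto simp: DCs_def)
  qed
  have U: "?I = (\<Union>A\<in>DCs W. \<Phi> A)" using dc by (auto simp: \<Phi>_def)
  have finDC: "finite (DCs W)" using fin(3) by (rule finite_subset[rotated, OF finite_Pow_iff[THEN iffD2]]) (auto simp: DCs_def)
  have finI: "finite ?I" using fin by (intro finite_Iset) auto
  have card1: "card ?I = (\<Sum>A\<in>DCs W. card (\<Phi> A))"
    unfolding U by (rule card_UN_disjoint[OF finDC]) (use finI in \<open>auto simp: \<Phi>_def intro: finite_subset\<close>)
  have cardA: "card (\<Phi> A) = card (Iset V1 D A E) * card (Iset V2 D (W - A) E)" if A: "A \<in> DCs W" for A
  proof -
    have AW: "A \<subseteq> W" using A by (simp add: DCs_def)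
    have Adc: "\<And>a b. a \<in> A \<Longrightarrow> b \<in> W - A \<Longrightarrow> \<not> prefix a b" using A by (auto simp: DCs_def)
    let ?r = "\<lambda>f. (restrict f V1, restrict f V2)"
    let ?m = "\<lambda>(g, h). (\<lambda>x. if x \<in> V1 then g x else if x \<in> V2 then h x else undefined)"
    have n2: "x \<notin> V1" if "x \<in> V2" for x using d that by auto
    have "bij_betw ?r (\<Phi> A) (Iset V1 D A E \<times> Iset V2 D (W - A) E)"
    proof (rule bij_betw_byWitness[where f' = ?m])
      show "\<forall>f\<in>\<Phi> A. ?m (?r f) = f"
      proof
        fix f assume "f \<in> \<Phi> A"
        then have "f \<in> extensional (V1 \<union> V2)" by (auto simp: \<Phi>_def Iset_def PiE_iff)
        then show "?m (?r f) = f" by (auto simp: extensional_def)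
      qed
      show "\<forall>gh\<in>Iset V1 D A E \<times> Iset V2 D (W - A) E. ?r (?m gh) = gh"
      proof
        fix gh assume gh: "gh \<in> Iset V1 D A E \<times> Iset V2 D (W - A) E"
        obtain g h where "gh = (g, h)" by (cases gh)
        moreover have "g \<in> extensional V1" "h \<in> extensional V2" using gh calculation
          by (auto simp: Iset_def PiE_iff)
        ultimately show "?r (?m gh) = gh" using n2 by (auto simp: extensional_def fun_eq_iff)
      qed
      show "?r ` \<Phi> A \<subseteq> Iset V1 D A E \<times> Iset V2 D (W - A) E"
      proof
        fix q0 assume "q0 \<in> ?r ` \<Phi> A"
        then obtain f where f: "f \<in> \<Phi> A" and qf: "q0 = ?r f" by blast
        then have fI: "f \<in> ?I" and fA: "f ` V1 = A" by (auto simp: \<Phi>_def)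
        note F = IsetD[OF fI]
        have inj: "inj_on f (V1 \<union> V2)" and im: "f ` (V1 \<union> V2) = W" using F(2) by (auto simp: bij_betw_def)
        have im2: "f ` V2 = W - A"
        proof -
          have "f ` ((V1 \<union> V2) - V1) = f ` (V1 \<union> V2) - f ` V1"
            by (rule inj_on_image_set_diff[OF inj]) auto
          moreover have "(V1 \<union> V2) - V1 = V2" using d by auto
          ultimately show ?thesis using im fA by simp
        qed
        have b1: "bij_betw (restrict f V1) V1 A"
          using inj fA by (auto simp: bij_betw_def intro: inj_on_subset cong: inj_on_cong)
        have b2: "bij_betw (restrict f V2) V2 (W - A)"
          using inj im2 by (auto simp: bij_betw_def intro: inj_on_subset cong: inj_on_cong)
        have "restrict f V1 \<in> Iset V1 D A E"
          by (rule IsetI) (use b1 F(3-5) in \<open>auto simp: bij_betw_def\<close>)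
        moreover have "restrict f V2 \<in> Iset V2 D (W - A) E"
          by (rule IsetI) (use b2 F(3-5) in \<open>auto simp: bij_betw_def\<close>)
        ultimately show "q0 \<in> Iset V1 D A E \<times> Iset V2 D (W - A) E" using qf by simp
      qed
      show "?m ` (Iset V1 D A E \<times> Iset V2 D (W - A) E) \<subseteq> \<Phi> A"
      proof
        fix q0 assume "q0 \<in> ?m ` (Iset V1 D A E \<times> Iset V2 D (W - A) E)"
        then obtain g h where g: "g \<in> Iset V1 D A E" and h: "h \<in> Iset V2 D (W - A) E" and qm: "q0 = ?m (g, h)"
          by blast
        note G = IsetD[OF g] and H = IsetD[OF h]
        let ?f = "?m (g, h)"
        have f1: "?f x = g x" if "x \<in> V1" for x using that by simp
        have f2: "?f x = h x" if "x \<in> V2" for x using that n2 by simp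
        have gA: "g x \<in> A" if "x \<in> V1" for x using G(1) that by auto
        have hA: "h x \<in> W - A" if "x \<in> V2" for x using H(1) that by auto
        have "bij_betw ?f V1 A" using G(2) by (rule bij_betw_cong[THEN iffD1, rotated]) (use f1 in auto)
        moreover have "bij_betw ?f V2 (W - A)" using H(2) by (rule bij_betw_cong[THEN iffD1, rotated]) (use f2 in auto)
        ultimately have "bij_betw ?f (V1 \<union> V2) (A \<union> (W - A))" by (rule bij_betw_combine) auto
        moreover have "A \<union> (W - A) = W" using AW by auto
        ultimately have fb: "bij_betw ?f (V1 \<union> V2) W" by simp
        have "?f \<in> ?I"
        proof (rule IsetI[OF _ fb])
          show "?f \<in> V1 \<union> V2 \<rightarrow>\<^sub>E W"
          proof (rule PiE_I)
            fix x assume "x \<in> V1 \<union> V2"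
            then show "?f x \<in> W" using gA hA AW f2 by (cases "x \<in> V1") auto
          next
            fix x assume "x \<notin> V1 \<union> V2"
            then show "?f x = undefined" by simp
          qed
        next
          fix x y assume x: "x \<in> V1 \<union> V2" and y: "y \<in> V1 \<union> V2" and p: "prefix y x"
          show "gauche_path_ge (?f x) (?f y)"
          proof (cases "x \<in> V1")
            case True
            then have "y \<in> V1" using y p cr by blast
            then show ?thesis using G(3) True p by simp
          next
            case False
            then have "x \<in> V2" using x by simp
            then have "y \<in> V2" using y p cr by blast
            then show ?thesis using H(3) \<open>x \<in> V2\<close> p f2 by simp
          qed
        next
          fix x y assume x: "x \<in> V1 \<union> V2" and y: "y \<in> V1 \<union> V2" and p: "prefix (?f y) (?f x)"
          show "gauche_path_ge x y"
          proof (cases "x \<in> V1")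
            case True
            show ?thesis
            proof (cases "y \<in> V1")
              case True then show ?thesis using G(4) \<open>x \<in> V1\<close> p by simp
            next
              case False then show ?thesis using cr \<open>x \<in> V1\<close> y by blast
            qed
          next
            case False
            then have xv: "x \<in> V2" using x by simp
            show ?thesis
            proof (cases "y \<in> V1")
              case True
              then have "\<not> prefix (g y) (h x)" using Adc gA hA xv by blast
              then show ?thesis using p True f2[OF xv] by simp
            next
              case False
              then have "y \<in> V2" using y by simp
              then show ?thesis using H(4) xv p f2 by simp
            qed
          qed
        next
          fix x assume "x \<in> V1 \<union> V2"
          then show "E (?f x) = D x" using G(5) H(5) f2 by auto
        qed
        moreover have "?f ` V1 = A" using G(2) f1 by (auto simp: bij_betw_def)
        ultimately show "q0 \<in> \<Phi> A" using qm by (simp add: \<Phi>_def)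
      qed
    qed
    then have "card (\<Phi> A) = card (Iset V1 D A E \<times> Iset V2 D (W - A) E)" by (rule bij_betw_same_card)
    then show ?thesis by (simp add: card_cartesian_product)
  qed
  show ?thesis using card1 cardA by simp
qed


section \<open>The three defining identities for the counting function\<close>

lemma card_I_Nil: "of_nat (card (I_set [] G)) = counit G"
proof (cases "G = []")
  case True
  have "I_set [] G = {\<lambda>_. undefined}"
    using True by (auto simp: I_set_Iset Iset_def bij_betw_def)
  then show ?thesis using True by (simp add: counit_def)
next
  case False
  then have "[0] \<in> vertices G" by (simp add: vertices_def)
  then have "I_set [] G = {}"
    by (auto simp: I_set_Iset Iset_def bij_betw_def)
  then show ?thesis using False by (simp add: counit_def)
qed

lemma card_I_append:
  "of_nat (card (I_set (F1 @ F2) G)) = (\<Sum>(P, R) \<leftarrow> coprod G. of_nat (card (I_set F1 P)) * of_nat (card (I_set F2 R)) :: rat)"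
proof -
  let ?n = "length F1"
  let ?V1 = "vertices F1" and ?V2 = "shift ?n ` vertices F2" and ?D = "decoration (F1 @ F2)"
  let ?W = "vertices G" and ?E = "decoration G"
  have fin: "finite ?V1" "finite ?V2" "finite ?W" by (auto simp: finite_vertices)
  have cr: "\<And>x y. x \<in> ?V1 \<Longrightarrow> y \<in> ?V2 \<Longrightarrow> \<not> prefix x y \<and> \<not> prefix y x \<and> gauche_path_ge x y \<and> \<not> gauche_path_ge y x"
    using cross_app by blast
  have d: "?V1 \<inter> ?V2 = {}" using cross_app by blast
  have L: "card (I_set (F1 @ F2) G) = (\<Sum>A\<in>DCs ?W. card (Iset ?V1 ?D A ?E) * card (Iset ?V2 ?D (?W - A) ?E))"
    unfolding I_set_Iset vertices_append by (rule card_Iset_split[OF fin d cr])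
  have iso1: "iso (vertices F1) (decoration F1) ?V1 ?D"
    by (rule iso_dec[OF iso_refl]) (auto simp: decoration_append1)
  have iso2: "iso (vertices F2) (decoration F2) ?V2 ?D"
    by (rule iso_shift) (simp add: decoration_append2)
  have "(\<Sum>(P, R) \<leftarrow> coprod G. of_nat (card (I_set F1 P)) * of_nat (card (I_set F2 R)) :: rat)
      = (\<Sum>A\<in>DCs ?W. of_nat (card (Iset ?V1 ?D A ?E) * card (Iset ?V2 ?D (?W - A) ?E)))"
  proof (rule rls_sum[OF coprod_rls], goal_cases)
    case (1 c A)
    then have A: "A \<in> DCs ?W" and rc: "Rc G c A" by auto
    obtain P R where c: "c = (P, R)" by (cases c)
    have AW: "A \<subseteq> ?W" using A by (simp add: DCs_def)
    have fA: "finite A" "finite (?W - A)" using AW fin by (auto intro: finite_subset)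
    have iP: "iso (vertices P) (decoration P) A ?E" and iR: "iso (vertices R) (decoration R) (?W - A) ?E"
      using rc c by (auto simp: Rc_def)
    have "card (I_set F1 P) = card (Iset (vertices F1) (decoration F1) A ?E)"
      unfolding I_set_Iset by (rule card_Iset_right) (auto simp: finite_vertices iP)
    also have "\<dots> = card (Iset ?V1 ?D A ?E)"
      by (rule card_Iset_left) (auto simp: finite_vertices fA iso1)
    finally have e1: "card (I_set F1 P) = card (Iset ?V1 ?D A ?E)" .
    have "card (I_set F2 R) = card (Iset (vertices F2) (decoration F2) (?W - A) ?E)"
      unfolding I_set_Iset by (rule card_Iset_right) (auto simp: finite_vertices iR)
    also have "\<dots> = card (Iset ?V2 ?D (?W - A) ?E)"
      by (rule card_Iset_left) (auto simp: finite_vertices fA iso2)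
    finally have e2: "card (I_set F2 R) = card (Iset ?V2 ?D (?W - A) ?E)" .
    show ?case using c e1 e2 by simp
  qed
  then show ?thesis using L by simp
qed


lemma vertex_single_iff: "[i] \<in> vertices G \<longleftrightarrow> i < length G"
  by (simp add: vertices_def)

lemma Bplus_shape:
  assumes f: "f \<in> I_set [Node d F] G"
  shows "G \<noteq> [] \<and> last G = Node d [] \<and> f [0] = [length G - 1]"
proof -
  let ?V = "vertices [Node d F]"
  have V: "?V = insert [0] (Cons 0 ` vertices F)" by (rule vertices_single)
  note FF = IsetD[OF f[unfolded I_set_Iset]]
  have z: "[0] \<in> ?V" using V by simp
  have fb: "bij_betw f ?V (vertices G)" using FF(2) .
  have im: "f ` ?V = vertices G" and inj: "inj_on f ?V" using fb by (auto simp: bij_betw_def)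
  define m where "m = f [0]"
  have mv: "m \<in> vertices G" unfolding m_def im[symmetric] using z by (rule imageI)
  have all: "gauche_path_ge w m" if "w \<in> vertices G" for w
  proof -
    have "w \<in> f ` ?V" using that im by simp
    then obtain x where x: "x \<in> ?V" "w = f x" by (rule imageE) simp
    have "x \<in> insert [0] (Cons 0 ` vertices F)" using x(1) V by simp
    then have "prefix [0] x" by (auto simp del: is_vertex_Cons')
    then show ?thesis using FF(3)[OF x(1) z] x m_def by simp
  qed
  obtain i p where m: "m = i # p" using mv vertices_ne by (cases m) auto
  have il: "i < length G" using mv m by (simp add: vertices_def)
  have "gauche_path_ge [i] (i # p)" using all[of "[i]"] il m by (simp add: vertex_single_iff)
  then have p: "p = []" by simp
  have ji: "j \<le> i" if "j < length G" for j
    using all[of "[j]"] that m p by (auto simp: vertex_single_iff split: if_splits)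
  have "length G - 1 \<le> i" using ji[of "length G - 1"] il by simp
  then have i: "i = length G - 1" using il by linarith
  obtain e cs where Gi: "G ! i = Node e cs" by (cases "G ! i")
  have cs: "cs = []"
  proof (rule ccontr)
    assume "cs \<noteq> []"
    then have w: "[i, 0] \<in> vertices G" using il Gi by (simp add: vertices_def)
    then have "[i, 0] \<in> f ` ?V" using im by simp
    then obtain x where x: "x \<in> ?V" "[i, 0] = f x" by (rule imageE) simp
    have "x \<noteq> [0]" using x m m_def p by auto
    then obtain v where v: "x = 0 # v" "v \<in> vertices F" using x V by auto
    have "prefix (f [0]) (f x)" using m m_def p by (simp add: x(2)[symmetric])
    then have "gauche_path_ge x [0]" using FF(4)[OF x(1) z] by simp
    then show False using v vertices_ne by auto
  qed
  have "decoration G m = d" using FF(5)[OF z] m_def by simp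
  then have "e = d" using m p Gi by simp
  moreover have "G \<noteq> []" using il by auto
  ultimately show ?thesis using Gi cs i m p m_def by (simp add: last_conv_nth)
qed

lemma card_I_Bplus:
  "(of_nat (card (I_set [Node d F] G)) :: rat) =
     (case gamma d G of None \<Rightarrow> 0 | Some G' \<Rightarrow> of_nat (card (I_set F G')))"
proof (cases "G \<noteq> [] \<and> last G = Node d []")
  case False
  have "f \<notin> I_set [Node d F] G" for f using False Bplus_shape[of f d F G] by blast
  then have "I_set [Node d F] G = {}" by blast
  then show ?thesis using False by (auto simp: gamma_def)
next
  case True
  define G' where "G' = butlast G"
  have G: "G = G' @ [Node d []]" using True G'_def by (metis append_butlast_last_id)
  have gam: "gamma d G = Some G'" using True G'_def by (simp add: gamma_def)
  let ?n = "length G'"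
  let ?X = "Cons 0 ` vertices F" and ?Y = "vertices G'"
  let ?DT = "decoration [Node d F]" and ?E = "decoration G"
  have VT: "vertices [Node d F] = insert [0] ?X" by (rule vertices_single)
  have VG: "vertices G = insert [?n] ?Y"
    using G vertices_append[of G' "[Node d []]"] by (simp add: vertices_single)
  have X0: "[0] \<notin> ?X" using vertices_ne by auto
  have Yh: "\<exists>j q. y = j # q \<and> j < ?n" if "y \<in> ?Y" for y
    using that by (cases y) (auto simp: vertices_def)
  have Yn: "[?n] \<notin> ?Y" using Yh by blast
  have Xh: "\<exists>v. x = 0 # v \<and> v \<noteq> []" if "x \<in> ?X" for x using that vertices_ne by auto
  have decn: "?E [?n] = d"
    using G decoration_append2[of "[0]" "[Node d []]" G'] by (simp add: vertices_single)
  have shape: "f [0] = [?n]" if "f \<in> I_set [Node d F] G" for f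
    using Bplus_shape[OF that] G by simp
  let ?r = "\<lambda>f. restrict f ?X"
  let ?m = "\<lambda>g x. if x = [0] then [?n] else g x"
  have "bij_betw ?r (I_set [Node d F] G) (Iset ?X ?DT ?Y ?E)"
  proof (rule bij_betw_byWitness[where f' = ?m])
    show "\<forall>f\<in>I_set [Node d F] G. ?m (?r f) = f"
    proof
      fix f assume f: "f \<in> I_set [Node d F] G"
      then have "f \<in> extensional (insert [0] ?X)" using VT by (auto simp: I_set_Iset Iset_def PiE_iff)
      then show "?m (?r f) = f" using shape[OF f] by (auto simp: extensional_def fun_eq_iff)
    qed
    show "\<forall>g\<in>Iset ?X ?DT ?Y ?E. ?r (?m g) = g"
    proof
      fix g assume "g \<in> Iset ?X ?DT ?Y ?E"
      then have "g \<in> extensional ?X" by (auto simp: Iset_def PiE_iff)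
      then show "?r (?m g) = g" using X0 by (auto simp: extensional_def fun_eq_iff)
    qed
    show "?r ` I_set [Node d F] G \<subseteq> Iset ?X ?DT ?Y ?E"
    proof
      fix q0 assume "q0 \<in> ?r ` I_set [Node d F] G"
      then obtain f where f: "f \<in> I_set [Node d F] G" and qf: "q0 = ?r f" by blast
      note FF = IsetD[OF f[unfolded I_set_Iset VT VG]]
      have f0: "f [0] = [?n]" by (rule shape[OF f])
      have inj: "inj_on f (insert [0] ?X)" and im: "f ` insert [0] ?X = insert [?n] ?Y"
        using FF(2) by (auto simp: bij_betw_def)
      have imX: "f ` ?X = ?Y"
      proof -
        have e1: "insert [0] ?X - {[0]} = ?X" using X0 by blast
        have e2: "insert [?n] ?Y - {[?n]} = ?Y" using Yn by blast
        have "f ` ?X = f ` (insert [0] ?X - {[0]})" by (simp only: e1)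
        also have "\<dots> = f ` insert [0] ?X - f ` {[0]}"
          by (rule inj_on_image_set_diff[OF inj]) auto
        also have "\<dots> = insert [?n] ?Y - {[?n]}" by (simp only: im) (simp only: image_insert image_empty f0)
        also have "\<dots> = ?Y" by (rule e2)
        finally show ?thesis .
      qed
      have bX: "bij_betw (?r f) ?X ?Y"
        using inj imX by (auto simp: bij_betw_def intro: inj_on_subset cong: inj_on_cong)
      have "?r f \<in> Iset ?X ?DT ?Y ?E"
        by (rule IsetI) (use bX FF(3-5) in \<open>auto simp: bij_betw_def\<close>)
      then show "q0 \<in> Iset ?X ?DT ?Y ?E" using qf by simp
    qed
    show "?m ` Iset ?X ?DT ?Y ?E \<subseteq> I_set [Node d F] G"
    proof
      fix q0 assume "q0 \<in> ?m ` Iset ?X ?DT ?Y ?E"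
      then obtain g where g: "g \<in> Iset ?X ?DT ?Y ?E" and qm: "q0 = ?m g" by blast
      note GG = IsetD[OF g]
      let ?f = "?m g"
      have gY: "g x \<in> ?Y" if "x \<in> ?X" for x using GG(1) that by auto
      have fX: "?f x = g x" if "x \<in> ?X" for x using that X0 by auto
      have "bij_betw ?f {[0]} {[?n]}" by (simp add: bij_betw_def)
      moreover have "bij_betw ?f ?X ?Y" using GG(2) by (rule bij_betw_cong[THEN iffD1, rotated]) (use fX in auto)
      ultimately have "bij_betw ?f ({[0]} \<union> ?X) ({[?n]} \<union> ?Y)" by (rule bij_betw_combine) (use Yn in auto)
      then have fb: "bij_betw ?f (insert [0] ?X) (insert [?n] ?Y)" by simp
      have "?f \<in> Iset (insert [0] ?X) ?DT (insert [?n] ?Y) ?E"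
      proof (rule IsetI[OF _ fb])
        show "?f \<in> insert [0] ?X \<rightarrow>\<^sub>E insert [?n] ?Y"
        proof (rule PiE_I)
          fix x assume "x \<in> insert [0] ?X"
          then show "?f x \<in> insert [?n] ?Y" using gY by auto
        next
          fix x assume "x \<notin> insert [0] ?X"
          then show "?f x = undefined" using GG(1) by (auto simp: PiE_iff extensional_def)
        qed
      next
        fix x y assume x: "x \<in> insert [0] ?X" and y: "y \<in> insert [0] ?X" and p: "prefix y x"
        show "gauche_path_ge (?f x) (?f y)"
        proof (cases "y = [0]")
          case True
          show ?thesis
          proof (cases "x = [0]")
            case True then show ?thesis using \<open>y = [0]\<close> by simp
          next
            case False
            then have "x \<in> ?X" using x by simp
            then obtain j q where "g x = j # q" "j < ?n" using gY Yh by blast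
            then show ?thesis using True False by simp
          qed
        next
          case False
          then have yX: "y \<in> ?X" using y by simp
          then obtain v where v: "y = 0 # v" "v \<noteq> []" using Xh by blast
          have "x \<noteq> [0]" using p v by auto
          then have "x \<in> ?X" using x by simp
          then show ?thesis using GG(3)[OF \<open>x \<in> ?X\<close> yX p] fX yX by simp
        qed
      next
        fix x y assume x: "x \<in> insert [0] ?X" and y: "y \<in> insert [0] ?X" and p: "prefix (?f y) (?f x)"
        show "gauche_path_ge x y"
        proof (cases "y = [0]")
          case True
          show ?thesis
          proof (cases "x = [0]")
            case True then show ?thesis using \<open>y = [0]\<close> by simp
          next
            case False
            then have "x \<in> ?X" using x by simp
            then obtain j q where "g x = j # q" "j < ?n" using gY Yh by blast
            then show ?thesis using True False p by simp
          qed
        next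
          case False
          then have yX: "y \<in> ?X" using y by simp
          then obtain j q where jq: "g y = j # q" "j < ?n" using gY Yh by blast
          show ?thesis
          proof (cases "x = [0]")
            case True
            then show ?thesis using p jq False by auto
          next
            case False
            then have "x \<in> ?X" using x by simp
            then show ?thesis using GG(4)[OF \<open>x \<in> ?X\<close> yX] p fX yX by simp
          qed
        qed
      next
        fix x assume "x \<in> insert [0] ?X"
        then show "?E (?f x) = ?DT x" using GG(5) decn by auto
      qed
      then show "q0 \<in> I_set [Node d F] G" using qm by (simp add: I_set_Iset VT VG)
    qed
  qed
  then have "card (I_set [Node d F] G) = card (Iset ?X ?DT ?Y ?E)" by (rule bij_betw_same_card)
  also have "\<dots> = card (Iset (vertices F) (decoration F) ?Y ?E)"
  proof (rule card_Iset_left)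
    show "iso ?X ?DT (vertices F) (decoration F)"
      by (rule iso_sym, rule iso_cons0) (auto dest: vertices_ne simp: decoration_single1)
  qed (auto simp: finite_vertices)
  also have "\<dots> = card (I_set F G')"
    unfolding I_set_Iset
  proof (rule card_Iset_right)
    show "iso ?Y ?E ?Y (decoration G')"
      by (rule iso_dec[OF iso_refl]) (auto simp: G decoration_append1)
  qed (auto simp: finite_vertices)
  finally show ?thesis using gam by simp
qed


lemma is_pairing_card: "is_pairing (\<lambda>F G. of_nat (card (I_set F G)) :: rat)"
  unfolding is_pairing_def
  by (intro conjI allI card_I_Nil card_I_append card_I_Bplus)

lemma pairing_unique:
  assumes p: "is_pairing p" and q: "is_pairing q"
  shows "p F G = q F G"
proof (induction F arbitrary: G rule: measure_induct_rule[of "size_list size"])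
  case (less F)
  have p1: "\<And>G. p [] G = counit G" and p2: "\<And>F1 F2 G. p (F1 @ F2) G = (\<Sum>(P, R) \<leftarrow> coprod G. p F1 P * p F2 R)"
    and p3: "\<And>d F G. p [Node d F] G = (case gamma d G of None \<Rightarrow> 0 | Some G' \<Rightarrow> p F G')"
    using p unfolding is_pairing_def by blast+
  have q1: "\<And>G. q [] G = counit G" and q2: "\<And>F1 F2 G. q (F1 @ F2) G = (\<Sum>(P, R) \<leftarrow> coprod G. q F1 P * q F2 R)"
    and q3: "\<And>d F G. q [Node d F] G = (case gamma d G of None \<Rightarrow> 0 | Some G' \<Rightarrow> q F G')"
    using q unfolding is_pairing_def by blast+
  show ?case
  proof (cases F)
    case Nil then show ?thesis by (simp add: p1 q1)
  next
    case (Cons t F')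
    show ?thesis
    proof (cases "F' = []")
      case True
      obtain d F0 where t: "t = Node d F0" by (cases t)
      have IH: "\<And>G. p F0 G = q F0 G" by (rule less) (simp add: Cons True t)
      show ?thesis using Cons True t by (simp add: p3 q3 IH split: option.splits)
    next
      case False
      have "0 < size_list size F'" using False by (cases F') auto
      then have IH1: "\<And>G. p [t] G = q [t] G" by (intro less) (simp add: Cons)
      have IH2: "\<And>G. p F' G = q F' G" by (rule less) (simp add: Cons)
      have "p ([t] @ F') G = q ([t] @ F') G" by (simp only: p2 q2 IH1 IH2)
      then show ?thesis using Cons by simp
    qed
  qed
qed

theorem mainTheorem6:
  fixes F G :: "'d pforest"
  shows "pairing F G = of_nat (card (I_set F G))"
proof -
  have "(pairing :: 'd pforest \<Rightarrow> 'd pforest \<Rightarrow> rat) = (\<lambda>F G. of_nat (card (I_set F G)))"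
    unfolding pairing_def
  proof (rule the_equality)
    show "is_pairing (\<lambda>(F::'d pforest) G. of_nat (card (I_set F G)) :: rat)" by (rule is_pairing_card)
  next
    fix p :: "'d pforest \<Rightarrow> 'd pforest \<Rightarrow> rat" assume "is_pairing p"
    then show "p = (\<lambda>F G. of_nat (card (I_set F G)))"
      using pairing_unique[OF _ is_pairing_card] by (auto simp: fun_eq_iff)
  qed
  from fun_cong[OF fun_cong[OF this, of F], of G] show ?thesis by simp
qed

end
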